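(* Let $I$ be a compact interval in $\mathbb{R}$ (of positive length) and $f:I\to\mathcal{K}(\mathbb{R})$ continuous. Then the distance set $\Delta(\mathcal{G}_*(f))=\{|x-x_*|+\mathfrak{H}(f(x),f(x_* )):x,x_*\in I\}$ is an interval, and $\dim_H\Delta(\mathcal{G}_*(f))=\underline{\dim}_B\Delta(\mathcal{G}_*(f))=\overline{\dim}_B\Delta(\mathcal{G}_*(f))=1$.
   Context: $\mathcal{K}(\mathbb{R})$: non-empty compact subsets of $\mathbb{R}$ with the Hausdorff distance $\mathfrak{H}$. $\mathcal{G}_*(f)=\{(x,f(x)):x\in I\}$. $\dim_H$, $\underline{\dim}_B$, $\overline{\dim}_B$: Hausdorff, lower box and upper box dimensions. *)

theory Defs
  imports "HOL-Analysis.Analysis" "HOL-Library.Liminf_Limsup"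
begin

text \<open>Hausdorff distance between two subsets of the reals (intended for non-empty
  compact sets, where it is the usual Hausdorff metric on K(R)).\<close>
definition hausdorff_dist :: "real set \<Rightarrow> real set \<Rightarrow> real" where
  "hausdorff_dist S T = max (SUP x\<in>S. infdist x T) (SUP y\<in>T. infdist y S)"

definition hausdorff_pre :: "real \<Rightarrow> real \<Rightarrow> real set \<Rightarrow> ennreal" where
  "hausdorff_pre s \<delta> A = (INF U \<in> {U :: nat \<Rightarrow> real set.
       (\<forall>i. bounded (U i) \<and> diameter (U i) \<le> \<delta>) \<and> A \<subseteq> (\<Union>i. U i)}.
       (\<Sum>i. ennreal (diameter (U i) powr s)))"

definition hausdorff_measure :: "real \<Rightarrow> real set \<Rightarrow> ennreal" where
  "hausdorff_measure s A = (SUP \<delta>\<in>{0<..}. hausdorff_pre s \<delta> A)"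

text \<open>Hausdorff dimension: inf of s with H^s(A) = 0 (positive s suffice, by monotonicity).\<close>
definition hausdorff_dim :: "real set \<Rightarrow> ereal" where
  "hausdorff_dim A = Inf {ereal s | s. s > 0 \<and> hausdorff_measure s A = 0}"

definition cover_number :: "real \<Rightarrow> real set \<Rightarrow> nat" where
  "cover_number \<delta> A = Inf {card F | F. finite F \<and> A \<subseteq> \<Union>F \<and>
       (\<forall>U\<in>F. bounded U \<and> diameter U \<le> \<delta>)}"

definition lower_box_dim :: "real set \<Rightarrow> ereal" where
  "lower_box_dim A = Liminf (at_right 0)
      (\<lambda>\<delta>. ereal (ln (real (cover_number \<delta> A)) / - ln \<delta>))"

definition upper_box_dim :: "real set \<Rightarrow> ereal" where
  "upper_box_dim A = Limsup (at_right 0)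
      (\<lambda>\<delta>. ereal (ln (real (cover_number \<delta> A)) / - ln \<delta>))"

end

theory Submission
  imports Defs "HOL-Real_Asymp.Real_Asymp"
begin


definition hd1 :: "real set \<Rightarrow> real set \<Rightarrow> real" where
  "hd1 S T = (SUP x\<in>S. infdist x T)"

lemma hd1_bdd:
  assumes "bounded S" "T \<noteq> {}"
  shows "bdd_above ((\<lambda>x. infdist x T) ` S)"
proof -
  obtain t where t: "t \<in> T" using assms by auto
  obtain e where e: "\<forall>x\<in>S. dist t x \<le> e" using bounded_any_center assms(1) by metis
  show ?thesis
    by (rule bdd_aboveI2[where M=e]) (metis dist_commute e infdist_le order_trans t)
qed

lemma hd1_ge: "bounded S \<Longrightarrow> T \<noteq> {} \<Longrightarrow> x \<in> S \<Longrightarrow> infdist x T \<le> hd1 S T"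
  unfolding hd1_def by (rule cSUP_upper[OF _ hd1_bdd])

lemma hd1_nonneg: "S \<noteq> {} \<Longrightarrow> bounded S \<Longrightarrow> T \<noteq> {} \<Longrightarrow> 0 \<le> hd1 S T"
  by (meson all_not_in_conv hd1_ge infdist_nonneg order_trans)

lemma hd1_refl: "S \<noteq> {} \<Longrightarrow> hd1 S S = 0"
  unfolding hd1_def by simp

lemma hd1_triangle:
  assumes "A \<noteq> {}" "B \<noteq> {}" "C \<noteq> {}" "bounded A" "bounded B" "bounded C"
  shows "hd1 A C \<le> hd1 A B + hd1 B C"
  unfolding hd1_def[of A C]
proof (rule cSUP_least)
  show "A \<noteq> {}" by fact
  fix x assume x: "x \<in> A"
  have "infdist x C - hd1 B C \<le> infdist x B"
    unfolding infdist_notempty[OF assms(2)]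
  proof (rule cINF_greatest)
    show "B \<noteq> {}" by fact
    fix y assume y: "y \<in> B"
    have "infdist x C \<le> infdist y C + dist x y" by (rule infdist_triangle)
    moreover have "infdist y C \<le> hd1 B C" using hd1_ge assms y by blast
    ultimately show "infdist x C - hd1 B C \<le> dist x y" by linarith
  qed
  moreover have "infdist x B \<le> hd1 A B" using hd1_ge assms x by blast
  ultimately show "infdist x C \<le> hd1 A B + hd1 B C" by linarith
qed

lemma hdist_eq: "hausdorff_dist S T = max (hd1 S T) (hd1 T S)"
  unfolding hausdorff_dist_def hd1_def by simp

lemma hdist_sym: "hausdorff_dist S T = hausdorff_dist T S"
  unfolding hdist_eq by simp

lemma hdist_refl: "S \<noteq> {} \<Longrightarrow> hausdorff_dist S S = 0"
  unfolding hdist_eq by (simp add: hd1_refl)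

lemma hdist_nonneg: "S \<noteq> {} \<Longrightarrow> bounded S \<Longrightarrow> T \<noteq> {} \<Longrightarrow> 0 \<le> hausdorff_dist S T"
  unfolding hdist_eq using hd1_nonneg by (simp add: le_max_iff_disj)

lemma hdist_triangle:
  assumes "A \<noteq> {}" "B \<noteq> {}" "C \<noteq> {}" "bounded A" "bounded B" "bounded C"
  shows "hausdorff_dist A C \<le> hausdorff_dist A B + hausdorff_dist B C"
  unfolding hdist_eq using hd1_triangle[OF assms] hd1_triangle[of C B A] assms
  by (smt (verit, best))

lemma hdist_lip:
  assumes "A \<noteq> {}" "B \<noteq> {}" "C \<noteq> {}" "D \<noteq> {}" "bounded A" "bounded B" "bounded C" "bounded D"
  shows "\<bar>hausdorff_dist A B - hausdorff_dist C D\<bar> \<le> hausdorff_dist A C + hausdorff_dist B D"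
proof -
  have 1: "hausdorff_dist A B \<le> hausdorff_dist A C + hausdorff_dist C B"
    using hdist_triangle assms by blast
  have 2: "hausdorff_dist C B \<le> hausdorff_dist C D + hausdorff_dist D B"
    using hdist_triangle assms by blast
  have 3: "hausdorff_dist C D \<le> hausdorff_dist C A + hausdorff_dist A D"
    using hdist_triangle assms by blast
  have 4: "hausdorff_dist A D \<le> hausdorff_dist A B + hausdorff_dist B D"
    using hdist_triangle assms by blast
  show ?thesis using 1 2 3 4 hdist_sym[of C A] hdist_sym[of D B] by linarith
qed



lemma sub_Icc: "bounded (U::real set) \<Longrightarrow> U \<subseteq> {Inf U .. Inf U + diameter U}"
proof
  fix u assume b: "bounded U" and u: "u \<in> U"
  have bb: "bdd_below U" using b by (simp add: bounded_imp_bdd_below)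
  have "Inf U \<le> u" using cInf_lower[OF u bb] .
  moreover have "u - diameter U \<le> Inf U"
  proof (rule cInf_greatest)
    show "U \<noteq> {}" using u by auto
    fix v assume "v \<in> U"
    then have "dist u v \<le> diameter U" using diameter_bounded_bound[OF b u] by blast
    then show "u - diameter U \<le> v" by (simp add: dist_real_def)
  qed
  ultimately show "u \<in> {Inf U .. Inf U + diameter U}" by simp
qed

lemma emI: "bounded U \<Longrightarrow> emeasure lborel {c .. c + diameter (U::real set)} = ennreal (diameter U)"
  using diameter_ge_0[of U] by simp

lemma lb_countable:
  assumes "M \<ge> 0" "\<forall>i. bounded (U i)" "{0..M} \<subseteq> (\<Union>i. U i)"
  shows "ennreal M \<le> (\<Sum>i. ennreal (diameter (U i)))"
proof -
  define I where "I i = {Inf (U i) .. Inf (U i) + diameter (U i)}" for i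
  have "ennreal M = emeasure lborel {0..M}" using assms by simp
  also have "\<dots> \<le> emeasure lborel (\<Union>i. I i)"
    apply (rule emeasure_mono)
    using assms sub_Icc unfolding I_def apply blast
    by simp
  also have "\<dots> \<le> (\<Sum>i. emeasure lborel (I i))"
    by (rule emeasure_subadditive_countably) (auto simp: I_def)
  also have "\<dots> = (\<Sum>i. ennreal (diameter (U i)))"
    unfolding I_def using emI assms(2) by simp
  finally show ?thesis .
qed

lemma lb_finite:
  assumes "M \<ge> 0" "finite F" "\<forall>U\<in>F. bounded U \<and> diameter U \<le> d" "{0..M} \<subseteq> \<Union>F"
  shows "M \<le> real (card F) * d"
proof -
  define I where "I U = {Inf U .. Inf U + diameter U}" for U
  have "ennreal M = emeasure lborel {0..M}" using assms by simp
  also have "\<dots> \<le> emeasure lborel (\<Union>U\<in>F. I U)"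
    apply (rule emeasure_mono)
    using assms sub_Icc unfolding I_def apply blast
    unfolding sets_lborel apply (rule borel_closed) using assms(2) by (auto intro!: closed_UN simp: I_def)
  also have "\<dots> \<le> (\<Sum>U\<in>F. emeasure lborel (I U))"
    by (rule emeasure_subadditive_finite) (auto simp: I_def assms)
  also have "\<dots> = (\<Sum>U\<in>F. ennreal (diameter U))"
    unfolding I_def using emI assms(3) by simp
  also have "\<dots> \<le> (\<Sum>U\<in>F. ennreal d)"
    by (rule sum_mono) (use assms in \<open>auto intro: ennreal_leI\<close>)
  also have "\<dots> = ennreal (real (card F) * d)"
    using assms by (auto simp: ennreal_mult' ennreal_of_nat_eq_real_of_nat)
  finally have "ennreal M \<le> ennreal (real (card F) * d)" .
  moreover have "0 \<le> d"
  proof -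
    obtain U where "U \<in> F" using assms(1,4) by auto
    then show ?thesis using assms(3) diameter_ge_0[of U] by auto
  qed
  ultimately show ?thesis using assms(1) by (auto simp: ennreal_le_iff2)
qed

lemma cover_ex:
  assumes "h > 0" "0 \<le> x" "x \<le> M"
  shows "\<exists>k<nat \<lfloor>M/h\<rfloor> + 1. x \<in> {real k * h .. (real k + 1) * h}"
proof (intro exI conjI)
  let ?k = "nat \<lfloor>x/h\<rfloor>"
  have fx: "0 \<le> \<lfloor>x/h\<rfloor>" using assms by simp
  have "\<lfloor>x/h\<rfloor> \<le> \<lfloor>M/h\<rfloor>" using assms by (intro floor_mono divide_right_mono) auto
  then show "?k < nat \<lfloor>M/h\<rfloor> + 1" by linarith
  have "real ?k = of_int \<lfloor>x/h\<rfloor>" using fx by simp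
  moreover have "of_int \<lfloor>x/h\<rfloor> \<le> x/h" "x/h < of_int \<lfloor>x/h\<rfloor> + 1" by linarith+
  moreover have "of_int \<lfloor>x/h\<rfloor> * h \<le> (x/h) * h"
    by (rule mult_right_mono) (use assms in auto)
  ultimately show "x \<in> {real ?k * h .. (real ?k + 1) * h}" using assms
    by (auto simp: field_simps)
qed



lemma nat_floor_le: "0 \<le> (x::real) \<Longrightarrow> real (nat \<lfloor>x\<rfloor> + 1) \<le> x + 1"
proof -
  assume x: "0 \<le> x"
  then have "real (nat \<lfloor>x\<rfloor>) = of_int \<lfloor>x\<rfloor>" by simp
  moreover have "of_int \<lfloor>x\<rfloor> \<le> x" by (rule of_int_floor_le)
  ultimately show ?thesis by simp
qed

lemma hpre_zero:
  assumes M: "M > 0" and s: "s > 1" and d: "\<delta> > 0"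
  shows "hausdorff_pre s \<delta> {0..M} = 0"
proof -
  have "hausdorff_pre s \<delta> {0..M} \<le> 0"
  proof (rule ennreal_le_epsilon)
    fix e :: real assume e: "0 < e"
    have lim: "((\<lambda>h::real. (M/h + 1) * h powr s) \<longlongrightarrow> 0) (at_right 0)"
      using M s by real_asymp
    have "eventually (\<lambda>h. (M/h + 1) * h powr s < e) (at_right 0)"
      using order_tendstoD(2)[OF lim e] .
    moreover have "eventually (\<lambda>h. h \<in> {0<..<\<delta>}) (at_right (0::real))"
      using eventually_at_right_real[OF d] .
    ultimately have "eventually (\<lambda>h. (M/h + 1) * h powr s < e \<and> h \<in> {0<..<\<delta>}) (at_right (0::real))"
      by (rule eventually_conj)
    then obtain h where h: "(M/h + 1) * h powr s < e" "0 < h" "h < \<delta>"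
      using eventually_happens'[OF trivial_limit_at_right_real] by fastforce
    define m where "m = nat \<lfloor>M/h\<rfloor> + 1"
    define U where "U k = (if k < m then {real k * h .. (real k + 1) * h} else {})" for k
    have Ub: "\<forall>i. bounded (U i) \<and> diameter (U i) \<le> \<delta>"
      using h by (auto simp: U_def algebra_simps)
    have Uc: "{0..M} \<subseteq> (\<Union>i. U i)"
    proof
      fix x assume "x \<in> {0..M}"
      then obtain k where "k < m" "x \<in> {real k * h .. (real k + 1) * h}"
        using cover_ex[OF h(2)] unfolding m_def by auto
      then show "x \<in> (\<Union>i. U i)" unfolding U_def by (intro UN_I[of k]) auto
    qed
    have "hausdorff_pre s \<delta> {0..M} \<le> (\<Sum>i. ennreal (diameter (U i) powr s))"
      unfolding hausdorff_pre_def by (rule INF_lower) (use Ub Uc in auto)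
    also have "\<dots> = (\<Sum>i<m. ennreal (diameter (U i) powr s))"
      by (rule suminf_finite) (auto simp: U_def)
    also have "\<dots> = (\<Sum>i<m. ennreal (h powr s))"
      using h by (intro sum.cong) (auto simp: U_def algebra_simps)
    also have "\<dots> = ennreal (real m * h powr s)"
      by (simp add: ennreal_mult' ennreal_of_nat_eq_real_of_nat)
    also have "\<dots> \<le> ennreal e"
    proof (rule ennreal_leI)
      have "real m \<le> M/h + 1" unfolding m_def using M h by (intro nat_floor_le) simp
      then have "real m * h powr s \<le> (M/h + 1) * h powr s"
        by (rule mult_right_mono) simp
      then show "real m * h powr s \<le> e" using h by linarith
    qed
    finally show "hausdorff_pre s \<delta> {0..M} \<le> 0 + ennreal e" by simp
  qed
  then show ?thesis by simp
qed

lemma hmeas_zero: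
  assumes "M > 0" "s > 1"
  shows "hausdorff_measure s {0..M} = 0"
  unfolding hausdorff_measure_def using hpre_zero[OF assms] by simp

lemma le_powr_s: "0 \<le> (d::real) \<Longrightarrow> d \<le> 1 \<Longrightarrow> 0 < s \<Longrightarrow> s \<le> 1 \<Longrightarrow> d \<le> d powr s"
  by (metis order.refl powr_mono' powr_one_gt_zero_iff powr_one_eq_one powr_zero_eq_one le_less)

lemma hmeas_pos:
  assumes M: "M > 0" and s: "0 < s" "s \<le> 1"
  shows "hausdorff_measure s {0..M} \<noteq> 0"
proof -
  have "ennreal M \<le> hausdorff_pre s 1 {0..M}"
    unfolding hausdorff_pre_def
  proof (rule INF_greatest)
    fix U assume "U \<in> {U :: nat \<Rightarrow> real set.
       (\<forall>i. bounded (U i) \<and> diameter (U i) \<le> 1) \<and> {0..M} \<subseteq> (\<Union>i. U i)}"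
    then have U: "\<forall>i. bounded (U i)" "\<forall>i. diameter (U i) \<le> 1" "{0..M} \<subseteq> (\<Union>i. U i)" by auto
    have "ennreal M \<le> (\<Sum>i. ennreal (diameter (U i)))"
      using lb_countable[OF _ U(1,3)] M by simp
    also have "\<dots> \<le> (\<Sum>i. ennreal (diameter (U i) powr s))"
      apply (rule suminf_le[OF _ summableI summableI])
      apply (rule ennreal_leI)
      apply (rule le_powr_s)
      using U diameter_ge_0 s by auto
    finally show "ennreal M \<le> (\<Sum>i. ennreal (diameter (U i) powr s))" .
  qed
  also have "\<dots> \<le> hausdorff_measure s {0..M}"
    unfolding hausdorff_measure_def by (rule SUP_upper) auto
  finally show ?thesis using M by (auto simp: top_unique)
qed

lemma hdim_Icc:
  assumes M: "M > 0"
  shows "hausdorff_dim {0..M} = 1"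
proof -
  have S: "{ereal s | s. s > 0 \<and> hausdorff_measure s {0..M} = 0} = {ereal s | s. s > 1}"
  proof safe
    fix s :: real assume "s > 0" "hausdorff_measure s {0..M} = 0"
    then show "\<exists>t. ereal s = ereal t \<and> t > 1" using hmeas_pos[OF M, of s] by (metis not_le)
  next
    fix s :: real assume "s > 1"
    then show "\<exists>t. ereal s = ereal t \<and> t > 0 \<and> hausdorff_measure t {0..M} = 0"
      using hmeas_zero[OF M] by auto
  qed
  show ?thesis unfolding hausdorff_dim_def S
  proof (rule antisym)
    show "Inf {ereal s |s. 1 < s} \<le> 1"
    proof (rule ereal_le_epsilon2)
      fix e :: real assume "0 < e"
      then have "Inf {ereal s |s. 1 < s} \<le> ereal (1 + e)" by (intro Inf_lower) auto
      then show "Inf {ereal s |s. 1 < s} \<le> 1 + ereal e" by (simp add: add.commute)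
    qed
    show "1 \<le> Inf {ereal s |s. 1 < s}" by (rule Inf_greatest) auto
  qed
qed



lemma cn_bounds:
  assumes M: "M > 0" and d: "\<delta> > 0"
  shows "M/\<delta> \<le> real (cover_number \<delta> {0..M}) \<and> real (cover_number \<delta> {0..M}) \<le> M/\<delta> + 1"
proof -
  define S where "S = {card F | F. finite F \<and> {0..M} \<subseteq> \<Union>F \<and>
       (\<forall>U\<in>F. bounded U \<and> diameter U \<le> \<delta>)}"
  have cn: "cover_number \<delta> {0..M} = Inf S" unfolding cover_number_def S_def ..
  define m where "m = nat \<lfloor>M/\<delta>\<rfloor> + 1"
  define F0 where "F0 = (\<lambda>k. {real k * \<delta> .. (real k + 1) * \<delta>}) ` {..<m}"
  have F0fin: "finite F0" unfolding F0_def by simp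
  have F0c: "{0..M} \<subseteq> \<Union>F0"
  proof
    fix x assume "x \<in> {0..M}"
    then obtain k where "k < m" "x \<in> {real k * \<delta> .. (real k + 1) * \<delta>}"
      using cover_ex[OF d] unfolding m_def by auto
    then show "x \<in> \<Union>F0" unfolding F0_def by auto
  qed
  have F0b: "\<forall>U\<in>F0. bounded U \<and> diameter U \<le> \<delta>"
    unfolding F0_def using d by (auto simp: algebra_simps)
  have inS: "card F0 \<in> S" unfolding S_def using F0fin F0c F0b by blast
  have "card F0 \<le> m" unfolding F0_def using card_image_le[of "{..<m}"] by simp
  moreover have "Inf S \<le> card F0" by (rule cInf_lower[OF inS]) simp
  moreover have "real m \<le> M/\<delta> + 1" unfolding m_def using M d by (intro nat_floor_le) simp
  ultimately have up: "real (Inf S) \<le> M/\<delta> + 1" by linarith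
  have "Inf S \<in> S" using inS Inf_nat_def1 by blast
  then obtain F where F: "Inf S = card F" "finite F" "{0..M} \<subseteq> \<Union>F"
    "\<forall>U\<in>F. bounded U \<and> diameter U \<le> \<delta>" unfolding S_def by blast
  have "M \<le> real (card F) * \<delta>" using lb_finite[OF _ F(2,4,3)] M by simp
  then have "M/\<delta> \<le> real (Inf S)" using F(1) d by (simp add: divide_le_eq)
  then show ?thesis using up cn by simp
qed

lemma box_lim:
  assumes M: "M > 0"
  shows "((\<lambda>\<delta>. ereal (ln (real (cover_number \<delta> {0..M})) / - ln \<delta>)) \<longlongrightarrow> ereal 1) (at_right 0)"
proof (rule tendsto_ereal)
  have l1: "((\<lambda>\<delta>::real. ln (M/\<delta>) / (-ln \<delta>)) \<longlongrightarrow> 1) (at_right 0)" using M by real_asymp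
  have l2: "((\<lambda>\<delta>::real. ln (M/\<delta> + 1) / (-ln \<delta>)) \<longlongrightarrow> 1) (at_right 0)" using M by real_asymp
  have ev: "eventually (\<lambda>\<delta>::real. \<delta> \<in> {0<..<1}) (at_right 0)"
    by (rule eventually_at_right_real) simp
  have b: "ln (M/\<delta>) / (-ln \<delta>) \<le> ln (real (cover_number \<delta> {0..M})) / - ln \<delta> \<and>
     ln (real (cover_number \<delta> {0..M})) / - ln \<delta> \<le> ln (M/\<delta> + 1) / (-ln \<delta>)"
    if d: "\<delta> \<in> {0<..<1}" for \<delta> :: real
  proof -
    have d0: "\<delta> > 0" and d1: "\<delta> < 1" using d by auto
    have lnpos: "- ln \<delta> > 0" using d0 d1 by simp
    note cb = cn_bounds[OF M d0]
    have p: "M/\<delta> > 0" using M d0 by simp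
    have "ln (M/\<delta>) \<le> ln (real (cover_number \<delta> {0..M}))"
      using cb p by (subst ln_le_cancel_iff) auto
    moreover have "ln (real (cover_number \<delta> {0..M})) \<le> ln (M/\<delta> + 1)"
      using cb p by (subst ln_le_cancel_iff) auto
    ultimately show ?thesis using lnpos by (auto intro: divide_right_mono_neg)
  qed
  show "((\<lambda>\<delta>. ln (real (cover_number \<delta> {0..M})) / - ln \<delta>) \<longlongrightarrow> 1) (at_right 0)"
    by (rule tendsto_sandwich[OF _ _ l1 l2]) (use ev b in \<open>auto elim: eventually_mono\<close>)
qed

lemma box_dims:
  assumes M: "M > 0"
  shows "lower_box_dim {0..M} = 1" "upper_box_dim {0..M} = 1"
  unfolding lower_box_dim_def upper_box_dim_def
  using lim_imp_Liminf[OF trivial_limit_at_right_real box_lim[OF M]]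
    lim_imp_Limsup[OF trivial_limit_at_right_real box_lim[OF M]] by (simp_all add: one_ereal_def)



theorem proposition4p5:
  fixes a b :: real and f :: "real \<Rightarrow> real set"
  assumes "a < b"
    and "\<forall>x\<in>{a..b}. f x \<noteq> {} \<and> compact (f x)"
    and "\<forall>x\<in>{a..b}. \<forall>e>0. \<exists>d>0. \<forall>y\<in>{a..b}. \<bar>y - x\<bar> < d \<longrightarrow> hausdorff_dist (f y) (f x) < e"
  shows "is_interval {\<bar>x - y\<bar> + hausdorff_dist (f x) (f y) | x y. x \<in> {a..b} \<and> y \<in> {a..b}}
    \<and> hausdorff_dim {\<bar>x - y\<bar> + hausdorff_dist (f x) (f y) | x y. x \<in> {a..b} \<and> y \<in> {a..b}} = 1
    \<and> lower_box_dim {\<bar>x - y\<bar> + hausdorff_dist (f x) (f y) | x y. x \<in> {a..b} \<and> y \<in> {a..b}} = 1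
    \<and> upper_box_dim {\<bar>x - y\<bar> + hausdorff_dist (f x) (f y) | x y. x \<in> {a..b} \<and> y \<in> {a..b}} = 1"
proof -
  define D where "D = {\<bar>x - y\<bar> + hausdorff_dist (f x) (f y) | x y. x \<in> {a..b} \<and> y \<in> {a..b}}"
  define g where "g p = \<bar>fst p - snd p\<bar> + hausdorff_dist (f (fst p)) (f (snd p))" for p :: "real \<times> real"
  define K where "K = {a..b} \<times> {a..b}"
  have ne: "\<And>x. x \<in> {a..b} \<Longrightarrow> f x \<noteq> {}" and bd: "\<And>x. x \<in> {a..b} \<Longrightarrow> bounded (f x)"
    using assms(2) compact_imp_bounded by (auto simp del: atLeastAtMost_iff)
  have DK: "D = g ` K" unfolding D_def g_def K_def by force
  have cont: "continuous_on K g"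
    unfolding continuous_on_iff
  proof (intro ballI allI impI)
    fix p e assume p: "p \<in> K" and e: "(0::real) < e"
    obtain x y where xy: "p = (x, y)" "x \<in> {a..b}" "y \<in> {a..b}" using p K_def by auto
    have e4: "e/4 > 0" using e by simp
    obtain d1 where d1: "d1 > 0" "\<forall>y'\<in>{a..b}. \<bar>y' - x\<bar> < d1 \<longrightarrow> hausdorff_dist (f y') (f x) < e/4"
      using assms(3) xy(2) e4 by blast
    obtain d2 where d2: "d2 > 0" "\<forall>y'\<in>{a..b}. \<bar>y' - y\<bar> < d2 \<longrightarrow> hausdorff_dist (f y') (f y) < e/4"
      using assms(3) xy(3) e4 by blast
    show "\<exists>d>0. \<forall>p'\<in>K. dist p' p < d \<longrightarrow> dist (g p') (g p) < e"
    proof (intro exI conjI ballI impI)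
      show "min (min d1 d2) (e/4) > 0" using d1 d2 e4 by simp
      fix p' assume p': "p' \<in> K" and dp: "dist p' p < min (min d1 d2) (e/4)"
      obtain x' y' where xy': "p' = (x', y')" "x' \<in> {a..b}" "y' \<in> {a..b}" using p' K_def by auto
      have dx: "\<bar>x' - x\<bar> < min (min d1 d2) (e/4)"
        using dist_fst_le[of p' p] dp xy xy' by (simp add: dist_real_def)
      have dy: "\<bar>y' - y\<bar> < min (min d1 d2) (e/4)"
        using dist_snd_le[of p' p] dp xy xy' by (simp add: dist_real_def)
      have h1: "hausdorff_dist (f x') (f x) < e/4" using d1 dx xy' by auto
      have h2: "hausdorff_dist (f y') (f y) < e/4" using d2 dy xy' by auto
      have L: "\<bar>hausdorff_dist (f x') (f y') - hausdorff_dist (f x) (f y)\<bar>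
          \<le> hausdorff_dist (f x') (f x) + hausdorff_dist (f y') (f y)"
        by (rule hdist_lip) (use ne bd xy xy' in auto)
      show "dist (g p') (g p) < e"
        using L h1 h2 dx dy unfolding g_def xy xy' dist_real_def by (simp; arith)
    qed
  qed
  have Kc: "compact K" "connected K" unfolding K_def
    by (auto intro: compact_Times connected_Times)
  have "compact D" "connected D" unfolding DK
    using Kc cont compact_continuous_image connected_continuous_image by auto
  then obtain c d where cd: "D = {c..d}" using connected_compact_interval_1 by blast
  have nn: "\<And>t. t \<in> D \<Longrightarrow> 0 \<le> t"
    unfolding D_def using hdist_nonneg ne bd by fastforce
  have "0 \<in> D" unfolding D_def using hdist_refl[OF ne[of a]] assms(1)
    by (intro CollectI exI[of _ a]) auto
  moreover have "\<bar>b - a\<bar> + hausdorff_dist (f b) (f a) \<in> D"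
    unfolding D_def using assms(1) by (intro CollectI exI[of _ b] exI[of _ a]) auto
  moreover have "0 \<le> hausdorff_dist (f b) (f a)" using hdist_nonneg ne bd assms(1) by simp
  ultimately have c0: "c = 0" and dpos: "d > 0" using cd nn assms(1)
    by (smt (verit) atLeastAtMost_iff)+
  have D0: "D = {0..d}" using cd c0 by simp
  show ?thesis
    unfolding D_def[symmetric] D0 using hdim_Icc[OF dpos] box_dims[OF dpos] by simp
qed


end
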